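(* Let $f(x)=x^5+px^4+qx^3+rx^2+sx+t$ with real coefficients and let $D$, $L_1$ be as in the context. Suppose $D=0$ and $L_1\neq 0$. Then $f$ has exactly one double root and three simple roots. Moreover, if $L_1>0$ then the double root and all three simple roots are real (4 distinct real roots), and if $L_1<0$ then $f$ has one real double root, one real simple root and a pair of non-real complex conjugate simple roots.
   Context: Let $\alpha_1,\dots,\alpha_5\in\mathbb{C}$ be the roots of $f$ listed with multiplicity. $D=\prod_{1\le i<j\le 5}(\alpha_i-\alpha_j)^2$ is the discriminant of $f$. $L_1=-264ps^2r-12p^3tq^2+36r^3pq-124srpq^2+28srp^3q+260sptq-132p^2qrt+240pr^2t+234sqr^2+32p^4tr+48ptq^3-56sp^3t-80q^2rt+194qs^2p^2-600str-6q^3sp^2+2p^2q^2r^2-12sr^2p^2-54r^4+320s^3-8q^3r^2-8r^3p^3+250qt^2-176q^2s^2+24q^4s-36p^4s^2-100p^2t^2$. *)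

theory Defs
  imports "HOL-Computational_Algebra.Computational_Algebra"
begin

definition quintic :: "real \<Rightarrow> real \<Rightarrow> real \<Rightarrow> real \<Rightarrow> real \<Rightarrow> real poly" where
  "quintic p q r s t = [:t, s, r, q, p, 1:]"

text \<open>Discriminant computed from a list of roots listed with multiplicity:
  product over i < j of (alpha_i - alpha_j)^2.\<close>
definition root_disc :: "complex list \<Rightarrow> complex" where
  "root_disc xs = (\<Prod>j<length xs. \<Prod>i<j. (xs ! i - xs ! j)^2)"

definition L1 :: "real \<Rightarrow> real \<Rightarrow> real \<Rightarrow> real \<Rightarrow> real \<Rightarrow> real" where
  "L1 p q r s t = -264*p*s^2*r - 12*p^3*t*q^2 + 36*r^3*p*q - 124*s*r*p*q^2 + 28*s*r*p^3*q
    + 260*s*p*t*q - 132*p^2*q*r*t + 240*p*r^2*t + 234*s*q*r^2 + 32*p^4*t*r + 48*p*t*q^3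
    - 56*s*p^3*t - 80*q^2*r*t + 194*q*s^2*p^2 - 600*s*t*r - 6*q^3*s*p^2 + 2*p^2*q^2*r^2
    - 12*s*r^2*p^2 - 54*r^4 + 320*s^3 - 8*q^3*r^2 - 8*r^3*p^3 + 250*q*t^2 - 176*q^2*s^2
    + 24*q^4*s - 36*p^4*s^2 - 100*p^2*t^2"

end

theory Submission imports Defs begin

definition L1c :: "complex \<Rightarrow> complex \<Rightarrow> complex \<Rightarrow> complex \<Rightarrow> complex \<Rightarrow> complex" where
  "L1c p q r s t = -264*p*s^2*r - 12*p^3*t*q^2 + 36*r^3*p*q - 124*s*r*p*q^2 + 28*s*r*p^3*q
    + 260*s*p*t*q - 132*p^2*q*r*t + 240*p*r^2*t + 234*s*q*r^2 + 32*p^4*t*r + 48*p*t*q^3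
    - 56*s*p^3*t - 80*q^2*r*t + 194*q*s^2*p^2 - 600*s*t*r - 6*q^3*s*p^2 + 2*p^2*q^2*r^2
    - 12*s*r^2*p^2 - 54*r^4 + 320*s^3 - 8*q^3*r^2 - 8*r^3*p^3 + 250*q*t^2 - 176*q^2*s^2
    + 24*q^4*s - 36*p^4*s^2 - 100*p^2*t^2"

lemma L1c_of_real:
  "complex_of_real (L1 p q r s t) = L1c (of_real p) (of_real q) (of_real r) (of_real s) (of_real t)"
  unfolding L1_def L1c_def by simp

lemma L1c_id: "L1c (-(2*z+a+b+c)) (z*z + 2*z*(a+b+c) + a*b+a*c+b*c) (-(z*z*(a+b+c) + 2*z*(a*b+a*c+b*c) + a*b*c))
   (z*z*(a*b+a*c+b*c) + 2*z*a*b*c) (-(z*z*a*b*c)) = 2*((z-a)*(z-b)*(z-c)*(a-b)*(a-c)*(b-c))^2"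
  for z a b c :: complex
  unfolding L1c_def by algebra

lemma prod5: "[:-z,1:]*[:-z,1:]*[:-a,1:]*[:-b,1:]*[:-c,1:] = [:-(z*z*a*b*c), z*z*(a*b+a*c+b*c) + 2*z*a*b*c, -(z*z*(a+b+c) + 2*z*(a*b+a*c+b*c) + a*b*c), z*z + 2*z*(a+b+c) + a*b+a*c+b*c, -(2*z+a+b+c), 1:]"
  for z a b c :: complex
  by (simp add: algebra_simps)

lemma disc5:
  assumes "length \<alpha> = 5" "root_disc \<alpha> = 0"
  shows "\<exists>z a b c. mset \<alpha> = {#z,z,a,b,c#}"
proof -
  obtain x0 x1 x2 x3 x4 where al: "\<alpha> = [x0,x1,x2,x3,x4]"
    using assms(1) by (auto simp: length_Suc_conv numeral_eq_Suc)
  have "x0 = x1 \<or> x0 = x2 \<or> x1 = x2 \<or> x0 = x3 \<or> x1 = x3 \<or> x2 = x3 \<or> x0 = x4 \<or> x1 = x4 \<or> x2 = x4 \<or> x3 = x4"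
    using assms(2) unfolding al root_disc_def by (simp add: lessThan_Suc numeral_eq_Suc) blast
  then show ?thesis unfolding al
    by (elim disjE; simp; metis add_mset_commute)
qed

lemma lin_ne: "[:-x,1:] \<noteq> (0::complex poly)" by simp

lemma proots_lin: "proots [:-x,1:] = {#x::complex#}"
  using proots_linear_factor[of "-x"] by simp

lemma proots_lin_mult: "Q \<noteq> 0 \<Longrightarrow> proots (Q * [:-x,1:]) = add_mset x (proots (Q::complex poly))"
  by (subst proots_mult) (use lin_ne in \<open>auto simp: proots_lin\<close>)

lemma real_eq: "Im z = 0 \<Longrightarrow> z = complex_of_real (Re z)"
  by (simp add: complex_eq_iff)

lemma sign_pos:
  assumes "Im z = 0" "Im a = 0" "Im b = 0" "Im c = 0" "distinct [z,a,b,c]"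
    and "complex_of_real L = 2*((z-a)*(z-b)*(z-c)*(a-b)*(a-c)*(b-c))^2"
  shows "L > 0"
proof -
  define zr ar br cr where "zr = Re z" "ar = Re a" "br = Re b" "cr = Re c"
  have z: "z = of_real zr" using assms(1) unfolding zr_ar_br_cr_def by (simp add: complex_eq_iff)
  have a: "a = of_real ar" using assms(2) unfolding zr_ar_br_cr_def by (simp add: complex_eq_iff)
  have b: "b = of_real br" using assms(3) unfolding zr_ar_br_cr_def by (simp add: complex_eq_iff)
  have c: "c = of_real cr" using assms(4) unfolding zr_ar_br_cr_def by (simp add: complex_eq_iff)
  define K where "K = (zr - ar)*(zr - br)*(zr - cr)*(ar - br)*(ar - cr)*(br - cr)"
  have "complex_of_real L = of_real (2*K^2)"
    using assms(6) unfolding K_def z a b c by simp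
  hence "L = 2*K^2" by (simp only: of_real_eq_iff)
  moreover have "K \<noteq> 0" using assms(5) unfolding K_def z a b c by auto
  ultimately show ?thesis by simp
qed

lemma sign_neg:
  assumes "Im z = 0" "Im a = 0" "Im b \<noteq> 0" "c = cnj b" "z \<noteq> a"
    and "complex_of_real L = 2*((z-a)*(z-b)*(z-c)*(a-b)*(a-c)*(b-c))^2"
  shows "L < 0"
proof -
  define zr ar x y where "zr = Re z" "ar = Re a" "x = Re b" "y = Im b"
  have z: "z = of_real zr" using assms(1) unfolding zr_ar_x_y_def by (simp add: complex_eq_iff)
  have a: "a = of_real ar" using assms(2) unfolding zr_ar_x_y_def by (simp add: complex_eq_iff)
  have b: "b = Complex x y" unfolding zr_ar_x_y_def by simp
  have c: "c = Complex x (-y)" unfolding assms(4) zr_ar_x_y_def by (simp add: complex_eq_iff)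
  have e1: "(z-b)*(z-c) = of_real ((zr-x)^2+y^2)" unfolding z b c
    by (simp add: complex_eq_iff power2_eq_square algebra_simps)
  have e2: "(a-b)*(a-c) = of_real ((ar-x)^2+y^2)" unfolding a b c
    by (simp add: complex_eq_iff power2_eq_square algebra_simps)
  have e3: "b - c = \<i> * of_real (2*y)" unfolding b c by (simp add: complex_eq_iff)
  define K where "K = (zr-ar)*((zr-x)^2+y^2)*((ar-x)^2+y^2)*(2*y)"
  have "(z-a)*(z-b)*(z-c)*(a-b)*(a-c)*(b-c) = (z-a)*((z-b)*(z-c))*((a-b)*(a-c))*(b-c)"
    by (simp add: mult_ac)
  also have "\<dots> = \<i> * of_real K" unfolding e1 e2 e3 unfolding K_def z a
    by (simp only: of_real_mult of_real_diff mult_ac)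
  finally have "complex_of_real L = of_real (-2*K^2)" using assms(6)
    by (simp add: power_mult_distrib)
  hence "L = -2*K^2" by (simp only: of_real_eq_iff)
  moreover have "K \<noteq> 0"
  proof -
    have "zr \<noteq> ar" using assms(5) z a by auto
    moreover have "y \<noteq> 0" using assms(3) unfolding zr_ar_x_y_def by simp
    ultimately show ?thesis unfolding K_def by (simp add: sum_power2_eq_zero_iff)
  qed
  ultimately show ?thesis by simp
qed

theorem mainTheorem2:
  fixes p q r s t :: real and \<alpha> :: "complex list"
  assumes roots: "mset \<alpha> = proots (map_poly complex_of_real (quintic p q r s t))"
    and D0: "root_disc \<alpha> = 0"
    and L1ne: "L1 p q r s t \<noteq> 0"
  shows "\<exists>z a b c. proots (map_poly complex_of_real (quintic p q r s t)) = {#z, z, a, b, c#}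
            \<and> distinct [z, a, b, c]
            \<and> (L1 p q r s t > 0 \<longrightarrow> Im z = 0 \<and> Im a = 0 \<and> Im b = 0 \<and> Im c = 0)
            \<and> (L1 p q r s t < 0 \<longrightarrow> Im z = 0 \<and> Im a = 0 \<and> Im b \<noteq> 0 \<and> c = cnj b)"
proof -
  define F where "F = map_poly complex_of_real (quintic p q r s t)"
  have Fe: "F = [:of_real t, of_real s, of_real r, of_real q, of_real p, 1:]"
    unfolding F_def quintic_def by (simp add: map_poly_pCons)
  have degF: "degree F = 5" and lcF: "lead_coeff F = 1" unfolding Fe by simp_all
  have "length \<alpha> = 5" using roots size_proots_complex[of F] degF unfolding F_def
    by (metis size_mset)
  then obtain z a b c where M: "proots F = {#z,z,a,b,c#}"
    using disc5 D0 roots unfolding F_def by metis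
  have F5: "F = [:-z,1:]*[:-z,1:]*[:-a,1:]*[:-b,1:]*[:-c,1:]"
  proof -
    have "F = (\<Prod>x\<in>#{#z,z,a,b,c#}. [:-x,1:])"
      using complex_poly_decompose_multiset[of F] unfolding lcF M by (simp only: smult_1_left)
    thus ?thesis by (simp only: image_mset_add_mset image_mset_empty prod_mset.add_mset
        prod_mset_empty mult_1_right mult.assoc)
  qed
  have eq: "[:of_real t, of_real s, of_real r, of_real q, of_real p, 1:] = [:-(z*z*a*b*c), z*z*(a*b+a*c+b*c) + 2*z*a*b*c, -(z*z*(a+b+c) + 2*z*(a*b+a*c+b*c) + a*b*c), z*z + 2*z*(a+b+c) + a*b+a*c+b*c, -(2*z+a+b+c), 1:]"
    using F5 unfolding prod5 Fe .
  have co: "of_real t = -(z*z*a*b*c)" "of_real s = z*z*(a*b+a*c+b*c) + 2*z*a*b*c"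
    "of_real r = -(z*z*(a+b+c) + 2*z*(a*b+a*c+b*c) + a*b*c)"
    "of_real q = z*z + 2*z*(a+b+c) + a*b+a*c+b*c" "of_real p = -(2*z+a+b+c)"
    using eq by (simp_all only: pCons_eq_iff)
  have W: "complex_of_real (L1 p q r s t) = 2*((z-a)*(z-b)*(z-c)*(a-b)*(a-c)*(b-c))^2"
    unfolding L1c_of_real co L1c_id ..
  have dist: "distinct [z,a,b,c]" using L1ne W by auto
  have cc: "of_real t = -(cnj z*cnj z*cnj a*cnj b*cnj c)"
    "of_real s = cnj z*cnj z*(cnj a*cnj b+cnj a*cnj c+cnj b*cnj c) + 2*cnj z*cnj a*cnj b*cnj c"
    "of_real r = -(cnj z*cnj z*(cnj a+cnj b+cnj c) + 2*cnj z*(cnj a*cnj b+cnj a*cnj c+cnj b*cnj c) + cnj a*cnj b*cnj c)"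
    "of_real q = cnj z*cnj z + 2*cnj z*(cnj a+cnj b+cnj c) + cnj a*cnj b+cnj a*cnj c+cnj b*cnj c"
    "of_real p = -(2*cnj z+cnj a+cnj b+cnj c)"
    using arg_cong[OF co(1), of cnj] arg_cong[OF co(2), of cnj] arg_cong[OF co(3), of cnj]
      arg_cong[OF co(4), of cnj] arg_cong[OF co(5), of cnj] by simp_all
  have "F = [:-cnj z,1:]*[:-cnj z,1:]*[:-cnj a,1:]*[:-cnj b,1:]*[:-cnj c,1:]"
    unfolding prod5 Fe cc ..
  hence "proots F = add_mset (cnj c) (add_mset (cnj b) (add_mset (cnj a) (add_mset (cnj z) {#cnj z#})))"
    by (simp only: proots_lin_mult proots_lin mult_eq_0_iff lin_ne simp_thms)
  hence "proots F = {#cnj z, cnj z, cnj a, cnj b, cnj c#}"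
    by (simp add: add_mset_commute)
  hence MM: "{#z,z,a,b,c#} = {#cnj z, cnj z, cnj a, cnj b, cnj c#}" using M by simp
  have cz: "cnj z = z"
  proof (rule ccontr)
    assume ne: "cnj z \<noteq> z"
    have "count {#z,z,a,b,c#} (cnj z) = count {#cnj z, cnj z, cnj a, cnj b, cnj c#} (cnj z)"
      using MM by simp
    thus False using ne dist by (auto split: if_splits)
  qed
  have zr: "Im z = 0" using cz by (simp add: complex_eq_iff)
  have inM: "x \<in># {#z,z,a,b,c#}" if "x \<in> {cnj a, cnj b, cnj c}" for x
    using that MM by (metis add_mset_commute insert_iff singletonD union_single_eq_member)
  have ca: "cnj a \<in> {a,b,c}" using inM[of "cnj a"] cz dist
    by (auto; metis complex_cnj_cnj)
  have cb: "cnj b \<in> {a,b,c}" using inM[of "cnj b"] cz dist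
    by (auto; metis complex_cnj_cnj)
  have ccc: "cnj c \<in> {a,b,c}" using inM[of "cnj c"] cz dist
    by (auto; metis complex_cnj_cnj)
  have re_iff: "Im x = 0 \<longleftrightarrow> cnj x = x" for x by (simp add: complex_eq_iff)
  show ?thesis
  proof (cases "Im a = 0 \<and> Im b = 0 \<and> Im c = 0")
    case True
    have "L1 p q r s t > 0" using sign_pos[OF zr _ _ _ dist W] True by blast
    thus ?thesis using M dist zr True unfolding F_def by (intro exI[of _ z] exI[of _ a] exI[of _ b] exI[of _ c]) auto
  next
    case False
    then consider (A) "Im a \<noteq> 0" | (B) "Im a = 0" "Im b \<noteq> 0" | (C) "Im a = 0" "Im b = 0" "Im c \<noteq> 0"
      by blast
    then show ?thesis
    proof cases
      case A
      hence "cnj a \<noteq> a" using re_iff by blast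
      with ca consider (A1) "cnj a = b" | (A2) "cnj a = c" by blast
      then show ?thesis
      proof cases
        case A1
        have "cnj c = c"
        proof -
          have "cnj c \<noteq> a" using A1 dist by (metis complex_cnj_cnj distinct_length_2_or_more)
          moreover have "cnj c \<noteq> b" using A1 dist by (metis complex_cnj_cnj distinct_length_2_or_more)
          ultimately show ?thesis using ccc by auto
        qed
        hence cr: "Im c = 0" using re_iff by blast
        have d2: "distinct [z,c,a,b]" using dist by auto
        have W2: "complex_of_real (L1 p q r s t) = 2*((z-c)*(z-a)*(z-b)*(c-a)*(c-b)*(a-b))^2"
          unfolding W by algebra
        have bb: "b = cnj a" using A1 by simp
        have "L1 p q r s t < 0" using sign_neg[OF zr cr A _ _ W2] bb d2 by (metis complex_cnj_cnj distinct_length_2_or_more)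
        thus ?thesis using M d2 zr cr A bb unfolding F_def
          by (intro exI[of _ z] exI[of _ c] exI[of _ a] exI[of _ b]) (auto simp: add_mset_commute)
      next
        case A2
        have "cnj b = b"
        proof -
          have "cnj b \<noteq> a" using A2 dist by (metis complex_cnj_cnj distinct_length_2_or_more)
          moreover have "cnj b \<noteq> c" using A2 dist by (metis complex_cnj_cnj distinct_length_2_or_more)
          ultimately show ?thesis using cb by auto
        qed
        hence br: "Im b = 0" using re_iff by blast
        have d2: "distinct [z,b,a,c]" using dist by auto
        have W2: "complex_of_real (L1 p q r s t) = 2*((z-b)*(z-a)*(z-c)*(b-a)*(b-c)*(a-c))^2"
          unfolding W by algebra
        have bb: "c = cnj a" using A2 by simp
        have "L1 p q r s t < 0" using sign_neg[OF zr br A _ _ W2] bb d2 by (metis distinct_length_2_or_more)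
        thus ?thesis using M d2 zr br A bb unfolding F_def
          by (intro exI[of _ z] exI[of _ b] exI[of _ a] exI[of _ c]) (auto simp: add_mset_commute)
      qed
    next
      case B
      have "cnj b \<noteq> b" using B re_iff by blast
      moreover have "cnj b \<noteq> a" using B re_iff dist by (metis complex_cnj_cnj distinct_length_2_or_more)
      ultimately have bc: "c = cnj b" using cb by auto
      have "L1 p q r s t < 0" using sign_neg[OF zr B(1) B(2) bc _ W] dist by auto
      thus ?thesis using M dist zr B bc unfolding F_def
        by (intro exI[of _ z] exI[of _ a] exI[of _ b] exI[of _ c]) auto
    next
      case C
      have "cnj c \<noteq> c" using C re_iff by blast
      moreover have "cnj c \<noteq> a" using C re_iff dist by (metis complex_cnj_cnj distinct_length_2_or_more)
      moreover have "cnj c \<noteq> b" using C re_iff dist by (metis complex_cnj_cnj distinct_length_2_or_more)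
      ultimately show ?thesis using ccc by auto
    qed
  qed
qed

end
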